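(* Fix $\epsilon\in(0,\mu)$ and, for $s\in\{1,2,\dots\}$, let $$\kappa(V)=\inf\{k\ge1:\ V_{n+1}\le n(\mu-\epsilon)/s\ \text{for all } n\ge k\}.$$ If $EV_1^q<\infty$ for some $q>2$, then $E\kappa(V)=O(s^{q/(q-1)})$ as $s\to\infty$.
   Context: $(V_n)_{n\ge1}$ are i.i.d. nonnegative random variables (service times; their law does not depend on $s$), and $\mu>0$ is a fixed constant (the mean interarrival time of the base system). $\inf\emptyset=\infty$. *)

theory Defs
  imports "HOL-Probability.Probability"
begin

definition kappa :: "real \<Rightarrow> real \<Rightarrow> nat \<Rightarrow> (nat \<Rightarrow> 'a \<Rightarrow> real) \<Rightarrow> 'a \<Rightarrow> enat" where
  "kappa mu eps s V \<omega> =
     Inf {enat k | k. k \<ge> 1 \<and> (\<forall>n\<ge>k. V (Suc n) \<omega> \<le> real n * (mu - eps) / real s)}"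

end

theory Submission
  imports Defs
begin

lemma term_bound:
  fixes x q :: real assumes "x \<ge> 1" "q > 2"
  shows "(x+1) powr (1-q) \<le> (x powr (2-q) - (x+1) powr (2-q)) / (q-2)"
proof -
  have d: "\<And>y. x \<le> y \<and> y \<le> x+1 \<Longrightarrow> ((\<lambda>z. z powr (2-q)) has_real_derivative (2-q) * y powr (2-q-1)) (at y)"
    using assms by (intro has_real_derivative_powr) auto
  obtain z where z: "x < z" "z < x+1" "(x+1) powr (2-q) - x powr (2-q) = (x+1 - x) * ((2-q) * z powr (2-q-1))"
    using MVT2[of x "x+1" "\<lambda>z. z powr (2-q)" "\<lambda>y. (2-q) * y powr (2-q-1)"] d by auto
  have e: "2-q-1 = 1-q" by simp
  have "(x+1) powr (1-q) \<le> z powr (1-q)"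
    using z assms by (intro powr_mono2') auto
  then have "(q-2) * (x+1) powr (1-q) \<le> (q-2) * z powr (1-q)" using assms by simp
  also have "\<dots> = x powr (2-q) - (x+1) powr (2-q)" using z(3) e by (simp add: algebra_simps)
  finally show ?thesis using assms by (simp add: field_simps)
qed

lemma tele:
  fixes q :: real assumes "q > 2" "m \<ge> 1"
  shows "(\<Sum>n\<in>{Suc m..<Suc m + k}. real n powr (1-q)) \<le> (real m powr (2-q) - real (m+k) powr (2-q)) / (q-2)"
proof (induction k)
  case 0 then show ?case by simp
next
  case (Suc k)
  have t: "real (Suc m + k) powr (1-q) \<le> (real (m+k) powr (2-q) - real (m+k+1) powr (2-q)) / (q-2)"
    using term_bound[of "real (m+k)" q] assms by (simp add: add_ac)
  have eq: "Suc m + Suc k = Suc (Suc m + k)" by simp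
  have "(\<Sum>n\<in>{Suc m..<Suc m + Suc k}. real n powr (1-q)) = (\<Sum>n\<in>{Suc m..<Suc m + k}. real n powr (1-q)) + real (Suc m + k) powr (1-q)"
    unfolding eq by simp
  also have "\<dots> \<le> (real m powr (2-q) - real (m+k) powr (2-q)) / (q-2) + (real (m+k) powr (2-q) - real (m+k+1) powr (2-q)) / (q-2)"
    using Suc t by linarith
  also have "\<dots> = (real m powr (2-q) - real (m+Suc k) powr (2-q)) / (q-2)"
    by (simp add: diff_divide_distrib add_ac)
  finally show ?case .
qed

lemma tele2:
  fixes q :: real assumes "q > 2" "m \<ge> 1"
  shows "(\<Sum>n\<in>{Suc m..<N}. real n powr (1-q)) \<le> real m powr (2-q) / (q-2)"
proof (cases "N \<ge> Suc m")
  case True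
  then have "{Suc m..<N} = {Suc m..<Suc m + (N - Suc m)}" by simp
  then have "(\<Sum>n\<in>{Suc m..<N}. real n powr (1-q)) \<le> (real m powr (2-q) - real (m+(N - Suc m)) powr (2-q)) / (q-2)"
    using tele[OF assms, of "N - Suc m"] by simp
  also have "\<dots> \<le> real m powr (2-q) / (q-2)"
    using assms by (intro divide_right_mono) auto
  finally show ?thesis .
next
  case False then show ?thesis using assms by simp
qed

lemma sum_if_ge: "(\<Sum>n<N. if (K::nat) \<le> n then g n else 0) = (\<Sum>n\<in>{K..<N}. (g n :: real))"
  by (induction N) (auto simp: atLeastLessThanSuc)

lemma series_bound:
  fixes q Cst :: real assumes q: "q > 2" and m: "m \<ge> 1" and C: "Cst \<ge> 0"
  shows "(\<Sum>n. ennreal (if Suc m \<le> n then Cst * real n powr (1-q) else 0)) \<le> ennreal (Cst * (real m powr (2-q) / (q-2)))"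
proof -
  define b where "b n = (if Suc m \<le> n then Cst * real n powr (1-q) else 0)" for n
  have b0: "\<And>n. 0 \<le> b n" using C by (simp add: b_def)
  have ps: "sum b {..<N} \<le> Cst * (real m powr (2-q) / (q-2))" for N
  proof -
    have "sum b {..<N} = (\<Sum>n\<in>{Suc m..<N}. Cst * real n powr (1-q))"
      unfolding b_def by (rule sum_if_ge)
    also have "\<dots> = Cst * (\<Sum>n\<in>{Suc m..<N}. real n powr (1-q))" by (simp add: sum_distrib_left)
    also have "\<dots> \<le> Cst * (real m powr (2-q) / (q-2))"
      using tele2[OF q m] C by (intro mult_left_mono) auto
    finally show ?thesis .
  qed
  have sb: "summable b" using b0 ps by (intro summableI_nonneg_bounded) auto
  have "(\<Sum>n. ennreal (b n)) = ennreal (suminf b)" using b0 sb by (rule suminf_ennreal2)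
  also have "\<dots> \<le> ennreal (Cst * (real m powr (2-q) / (q-2)))"
    using suminf_le_const[OF sb ps] by (rule ennreal_leI)
  finally show ?thesis unfolding b_def .
qed

lemma kappa_pw:
  assumes K: "K \<ge> 1"
  shows "ennreal_of_enat (kappa mu eps s V x) \<le> of_nat K +
     (\<Sum>n. ennreal (if K \<le> n \<and> real n * (mu - eps) / real s < V (Suc n) x then real n else 0))"
    (is "_ \<le> _ + ?S")
proof (cases "?S = top")
  case True then show ?thesis by simp
next
  case False
  define good where "good k = (\<forall>n\<ge>k. V (Suc n) x \<le> real n * (mu - eps) / real s)" for k
  define B where "B = {n. K \<le> n \<and> real n * (mu - eps) / real s < V (Suc n) x}"
  have kle: "ennreal_of_enat (kappa mu eps s V x) \<le> of_nat k" if "k \<ge> 1" "good k" for k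
  proof -
    have "kappa mu eps s V x \<le> enat k"
    proof -
      have "enat k \<in> {enat k | k. k \<ge> 1 \<and> (\<forall>n\<ge>k. V (Suc n) x \<le> real n * (mu - eps) / real s)}"
        using that unfolding good_def by blast
      then show ?thesis unfolding kappa_def by (rule Inf_lower)
    qed
    then have "ennreal_of_enat (kappa mu eps s V x) \<le> ennreal_of_enat (enat k)"
      using ennreal_of_enat_le_iff by blast
    then show ?thesis by simp
  qed
  define g where "g n = ennreal (if K \<le> n \<and> real n * (mu - eps) / real s < V (Suc n) x then real n else 0)" for n
  have Sg: "?S = suminf g" unfolding g_def ..
  have termle: "ennreal (real n) \<le> ?S" if "n \<in> B" for n
  proof -
    have "sum g {n} \<le> suminf g" by (rule sum_le_suminf[OF summableI]) auto
    moreover have "g n = ennreal (real n)" using that unfolding B_def g_def by simp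
    ultimately show ?thesis unfolding Sg by simp
  qed
  have "suminf g < top" using False unfolding Sg by (simp add: less_top)
  then obtain R where R0: "suminf g = ennreal R" "R \<ge> 0" unfolding less_top_ennreal by blast
  have R: "?S = ennreal R" "R \<ge> 0" using R0 unfolding Sg by auto
  have "B \<subseteq> {..nat \<lceil>R\<rceil>}"
  proof
    fix n assume "n \<in> B"
    then have "ennreal (real n) \<le> ennreal R" using termle R(1) by metis
    then have "real n \<le> R" using R(2) ennreal_le_iff by blast
    then have "real n \<le> real (nat \<lceil>R\<rceil>)" using real_nat_ceiling_ge[of R] by linarith
    then show "n \<in> {..nat \<lceil>R\<rceil>}" by simp
  qed
  then have finB: "finite B" by (rule finite_subset) auto
  show ?thesis
  proof (cases "B = {}")
    case True
    have "good K" unfolding good_def using True unfolding B_def by (auto simp: not_less)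
    then have "ennreal_of_enat (kappa mu eps s V x) \<le> of_nat K" using K by (intro kle) simp_all
    also have "\<dots> \<le> of_nat K + ?S" by simp
    finally show ?thesis .
  next
    case False
    define N where "N = Max B"
    have NB: "N \<in> B" using False finB unfolding N_def by simp
    have "K \<le> N" using NB unfolding B_def by simp
    have "good (Suc N)" unfolding good_def
    proof (intro allI impI)
      fix n assume "Suc N \<le> n"
      then have "n \<notin> B" using Max_ge[OF finB] unfolding N_def by fastforce
      then show "V (Suc n) x \<le> real n * (mu - eps) / real s" unfolding B_def using \<open>K \<le> N\<close> \<open>Suc N \<le> n\<close> by auto
    qed
    then have "ennreal_of_enat (kappa mu eps s V x) \<le> of_nat (Suc N)" by (intro kle) simp_all
    also have "\<dots> \<le> (of_nat (K + N) :: ennreal)" using K by (simp only: of_nat_le_iff)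
    also have "\<dots> = of_nat K + ennreal (real N)" by (metis of_nat_add ennreal_of_nat_eq_real_of_nat)
    also have "\<dots> \<le> of_nat K + ?S" using termle[OF NB] by (intro add_left_mono)
    finally show ?thesis .
  qed
qed

theorem mainTheorem11:
  fixes M :: "'a measure" and V :: "nat \<Rightarrow> 'a \<Rightarrow> real"
    and mu eps q :: real
  assumes "prob_space M"
    and rv: "\<And>n. n \<ge> 1 \<Longrightarrow> V n \<in> borel_measurable M"
    and indep: "prob_space.indep_vars M (\<lambda>_. borel) V {1..}"
    and ident: "\<And>n. n \<ge> 1 \<Longrightarrow> distr M borel (V n) = distr M borel (V 1)"
    and nonneg: "\<And>n x. n \<ge> 1 \<Longrightarrow> x \<in> space M \<Longrightarrow> V n x \<ge> 0"
    and mu: "mu > 0"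
    and eps: "0 < eps" "eps < mu"
    and q: "q > 2"
    and moment: "integrable M (\<lambda>x. V 1 x powr q)"
  shows "\<exists>C::real. \<exists>s0::nat. \<forall>s\<ge>s0.
           (\<integral>\<^sup>+ x. ennreal_of_enat (kappa mu eps s V x) \<partial>M)
             \<le> ennreal (C * real s powr (q / (q - 1)))"
proof -
  interpret P: prob_space M by fact
  define c where "c = mu - eps"
  have c: "c > 0" using eps unfolding c_def by simp
  define r where "r = q / (q - 1)"
  define QR where "QR = (\<integral>x. V 1 x powr q \<partial>M)"
  have QR0: "QR \<ge> 0" unfolding QR_def by (intro integral_nonneg_AE) auto
  have Qeq: "(\<integral>\<^sup>+ x. ennreal (V 1 x powr q) \<partial>M) = ennreal QR"
    unfolding QR_def using moment by (intro nn_integral_eq_integral) auto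
  have rvS[measurable]: "V (Suc n) \<in> borel_measurable M" for n using rv by simp
  have rv1[measurable]: "V 1 \<in> borel_measurable M" using rv by simp
  have Qn: "(\<integral>\<^sup>+ x. ennreal (V (Suc n) x powr q) \<partial>M) = ennreal QR" for n
  proof -
    have "(\<integral>\<^sup>+ x. ennreal (V (Suc n) x powr q) \<partial>M) = (\<integral>\<^sup>+ y. ennreal (y powr q) \<partial>distr M borel (V (Suc n)))"
      by (rule nn_integral_distr[symmetric]) auto
    also have "\<dots> = (\<integral>\<^sup>+ y. ennreal (y powr q) \<partial>distr M borel (V 1))" using ident[of "Suc n"] by simp
    also have "\<dots> = (\<integral>\<^sup>+ x. ennreal (V 1 x powr q) \<partial>M)"
      by (rule nn_integral_distr) auto
    finally show ?thesis using Qeq by simp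
  qed
  define C where "C = 3 + (1 / c) powr q * QR / (q - 2)"
  show ?thesis
  proof (intro exI allI impI)
    fix s :: nat assume s1: "1 \<le> s"
    have sr: "real s \<ge> 1" using s1 by simp
    define a where "a = real s powr r"
    have r0: "r \<ge> 0" unfolding r_def using q by simp
    have a1: "a \<ge> 1" unfolding a_def using sr r0 by (simp add: ge_one_powr_ge_zero)
    define m where "m = nat \<lceil>a\<rceil>"
    have ma: "real m \<ge> a" "real m < a + 1" unfolding m_def using a1 by linarith+
    have m1: "m \<ge> 1" using ma a1 by linarith
    define K where "K = Suc m"
    define Cst where "Cst = (real s / c) powr q * QR"
    have Cst0: "Cst \<ge> 0" unfolding Cst_def using QR0 by simp
    define f where "f n x = ennreal (if K \<le> n \<and> real n * (mu - eps) / real s < V (Suc n) x then real n else 0)" for n x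
    have fm[measurable]: "f n \<in> borel_measurable M" for n unfolding f_def by measurable
    have intf: "(\<integral>\<^sup>+ x. f n x \<partial>M) \<le> ennreal (if Suc m \<le> n then Cst * real n powr (1-q) else 0)" for n
    proof (cases "K \<le> n")
      case False
      then have "\<And>x. f n x = 0" unfolding f_def by simp
      then show ?thesis by simp
    next
      case True
      define t where "t = real n * (mu - eps) / real s"
      have n1: "real n \<ge> 1" using True m1 unfolding K_def by simp
      have t0: "t > 0" unfolding t_def using n1 sr eps by simp
      define A where "A = real n / t powr q"
      have A0: "A \<ge> 0" unfolding A_def by simp
      have pw: "f n x \<le> ennreal A * ennreal (V (Suc n) x powr q)" if x: "x \<in> space M" for x
      proof -
        have le: "(if K \<le> n \<and> t < V (Suc n) x then real n else 0) \<le> A * V (Suc n) x powr q"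
        proof (cases "t < V (Suc n) x")
          case True
          have h: "t powr q \<le> V (Suc n) x powr q" using True t0 q by (intro powr_mono2) auto
          have tp: "t powr q > 0" using t0 by simp
          have "real n = real n * t powr q / t powr q" using tp by simp
          also have "\<dots> \<le> real n * V (Suc n) x powr q / t powr q"
            using h tp n1 by (intro divide_right_mono mult_left_mono) auto
          also have "\<dots> = A * V (Suc n) x powr q" unfolding A_def by simp
          finally show ?thesis by simp
        next
          case False then show ?thesis using A0 by simp
        qed
        have "f n x = ennreal (if K \<le> n \<and> t < V (Suc n) x then real n else 0)" unfolding f_def t_def ..
        also have "\<dots> \<le> ennreal (A * V (Suc n) x powr q)" using le by (rule ennreal_leI)
        also have "\<dots> = ennreal A * ennreal (V (Suc n) x powr q)" by (rule ennreal_mult'[OF A0])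
        finally show ?thesis .
      qed
      have "(\<integral>\<^sup>+ x. f n x \<partial>M) \<le> (\<integral>\<^sup>+ x. ennreal A * ennreal (V (Suc n) x powr q) \<partial>M)"
        using pw by (intro nn_integral_mono) auto
      also have "\<dots> = ennreal A * ennreal QR" by (subst nn_integral_cmult) (auto simp: Qn)
      also have "\<dots> = ennreal (A * QR)" using A0 QR0 by (simp add: ennreal_mult)
      also have "A * QR = Cst * real n powr (1-q)"
      proof -
        have np: "real n powr q > 0" "real s powr q > 0" "c powr q > 0" using n1 sr c by auto
        have "t = real n * c / real s" unfolding t_def c_def by simp
        then have tq: "t powr q = real n powr q * c powr q / real s powr q"
          using n1 sr c by (simp add: powr_mult powr_divide)
        have sc: "(real s / c) powr q = real s powr q / c powr q" using sr c by (simp add: powr_divide)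
        have n1q: "real n powr (1-q) = real n / real n powr q" using n1 by (simp add: powr_diff)
        show ?thesis unfolding A_def Cst_def tq sc n1q using np by (simp add: field_simps)
      qed
      finally show ?thesis using True unfolding K_def by simp
    qed
    have "(\<integral>\<^sup>+ x. ennreal_of_enat (kappa mu eps s V x) \<partial>M) \<le> (\<integral>\<^sup>+ x. of_nat K + (\<Sum>n. f n x) \<partial>M)"
      unfolding f_def by (intro nn_integral_mono kappa_pw) (simp add: K_def)
    also have "\<dots> = (\<integral>\<^sup>+ x. of_nat K \<partial>M) + (\<integral>\<^sup>+ x. (\<Sum>n. f n x) \<partial>M)"
      by (rule nn_integral_add) auto
    also have "(\<integral>\<^sup>+ x. of_nat K \<partial>M) = of_nat K" by (simp add: P.emeasure_space_1)
    also have "(\<integral>\<^sup>+ x. (\<Sum>n. f n x) \<partial>M) = (\<Sum>n. \<integral>\<^sup>+ x. f n x \<partial>M)"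
      by (rule nn_integral_suminf) auto
    also have "\<dots> \<le> (\<Sum>n. ennreal (if Suc m \<le> n then Cst * real n powr (1-q) else 0))"
      using intf by (intro suminf_le summableI) auto
    also have "\<dots> \<le> ennreal (Cst * (real m powr (2-q) / (q-2)))"
      by (rule series_bound[OF q m1 Cst0])
    also have "of_nat K + ennreal (Cst * (real m powr (2-q) / (q-2))) = ennreal (real K + Cst * (real m powr (2-q) / (q-2)))"
      using Cst0 q by (simp add: ennreal_plus ennreal_of_nat_eq_real_of_nat)
    also have "\<dots> \<le> ennreal (C * real s powr (q / (q - 1)))"
    proof (rule ennreal_leI)
      have Kb: "real K \<le> 3 * a" unfolding K_def using ma a1 by simp
      have mp: "real m powr (2-q) \<le> a powr (2-q)" using ma a1 q by (intro powr_mono2') auto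
      have "Cst * (real m powr (2-q) / (q-2)) \<le> Cst * (a powr (2-q) / (q-2))"
        using mp Cst0 q by (intro mult_left_mono divide_right_mono) auto
      also have "Cst * a powr (2-q) = (1/c) powr q * QR * a"
      proof -
        have e: "q + r * (2 - q) = r" unfolding r_def using q by (simp add: field_simps)
        have "(real s / c) powr q = real s powr q * (1/c) powr q" using sr c
          by (simp add: powr_mult[symmetric])
        moreover have "a powr (2-q) = real s powr (r * (2-q))" unfolding a_def by (simp add: powr_powr)
        moreover have "real s powr q * real s powr (r * (2-q)) = a" unfolding a_def
          by (simp add: powr_add[symmetric] e)
        ultimately show ?thesis unfolding Cst_def by (simp add: algebra_simps)
      qed
      then have "Cst * (a powr (2-q) / (q-2)) = (1/c) powr q * QR / (q-2) * a" by (simp add: field_simps)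
      finally have "real K + Cst * (real m powr (2-q) / (q-2)) \<le> 3 * a + (1/c) powr q * QR / (q-2) * a"
        using Kb by linarith
      also have "\<dots> = C * real s powr (q / (q - 1))" unfolding C_def a_def r_def by (simp add: algebra_simps)
      finally show "real K + Cst * (real m powr (2-q) / (q-2)) \<le> C * real s powr (q / (q - 1))" .
    qed
    finally show "(\<integral>\<^sup>+ x. ennreal_of_enat (kappa mu eps s V x) \<partial>M) \<le> ennreal (C * real s powr (q / (q - 1)))"
      by (auto intro: add_left_mono)
  qed
qed

end
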